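(* Let $P$ be a simplicial $d$-dimensional polytope and let $\partial P$ denote its boundary complex (facets are the $(d-1)$-simplices on the vertex sets of the facets of $P$). Suppose there is a facet $F_0$ of $\partial P$ with the following property: setting $\mathcal{F}_0=\{F_0\}$ and, recursively, $\mathcal{F}_i$ = the set of facets of $\partial P$ not in $\mathcal{F}_0\cup\cdots\cup\mathcal{F}_{i-1}$ that share a common $(d-2)$-dimensional face (ridge) with some facet in $\mathcal{F}_{i-1}$, every linear ordering of the facets that lists all facets of $\mathcal{F}_0$, then all of $\mathcal{F}_1$, then all of $\mathcal{F}_2$, etc. (in arbitrary order within each $\mathcal{F}_i$) is a shelling order of $\partial P$, and in such an order a facet $F$ has type $i$ if and only if $F\in\mathcal{F}_i$. Then $P$ is combinatorially equivalent to the $d$-dimensional crosspolytope.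
   Context: A pure simplicial complex $\Delta$ is shellable with shelling order $F_1,\ldots,F_k$ of its facets if for all $i<j\leqslant k$ there exist $l<j$ and a vertex $v$ of $F_j$ with $F_i\cap F_j\subseteq F_l\cap F_j=F_j\setminus\{v\}$. For a shelling order, the restriction of $F_j$ is $\mathcal{R}(F_j)=\{v\in F_j: F_j\setminus\{v\}\subset F_i \text{ for some } i<j\}$, and the type of $F_j$ is $|\mathcal{R}(F_j)|$. *)

theory Defs
  imports "HOL-Analysis.Analysis"
begin

definition simplicial_polytope :: "nat \<Rightarrow> 'a::euclidean_space set \<Rightarrow> bool" where
  "simplicial_polytope d P \<longleftrightarrow> polytope P \<and> aff_dim P = int d \<and>
     (\<forall>F. F facet_of P \<longrightarrow> (int d - 1) simplex F)"

definition boundary_facets :: "'a::euclidean_space set \<Rightarrow> 'a set set" where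
  "boundary_facets P = {{v. v extreme_point_of F} | F. F facet_of P}"

definition share_ridge :: "'v set \<Rightarrow> 'v set \<Rightarrow> bool" where
  "share_ridge F G \<longleftrightarrow> F \<noteq> G \<and> card (F \<inter> G) + 1 = card F"

(* layers_aux Fs F0 i = (\<F>_i, \<F>_0 \<union> ... \<union> \<F>_i) *)
fun layers_aux :: "'v set set \<Rightarrow> 'v set \<Rightarrow> nat \<Rightarrow> 'v set set \<times> 'v set set" where
  "layers_aux Fs F0 0 = ({F0}, {F0})"
| "layers_aux Fs F0 (Suc i) =
     (let (L, U) = layers_aux Fs F0 i;
          L' = {F \<in> Fs. F \<notin> U \<and> (\<exists>G \<in> L. share_ridge F G)}
      in (L', U \<union> L'))"

definition layer :: "'v set set \<Rightarrow> 'v set \<Rightarrow> nat \<Rightarrow> 'v set set" where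
  "layer Fs F0 i = fst (layers_aux Fs F0 i)"

definition shelling_order :: "'v set list \<Rightarrow> bool" where
  "shelling_order L \<longleftrightarrow> (\<forall>j < length L. \<forall>i < j. \<exists>l < j. \<exists>v \<in> L ! j.
      L ! i \<inter> L ! j \<subseteq> L ! l \<inter> L ! j \<and> L ! l \<inter> L ! j = L ! j - {v})"

definition restriction :: "'v set list \<Rightarrow> nat \<Rightarrow> 'v set" where
  "restriction L j = {v \<in> L ! j. \<exists>i < j. L ! j - {v} \<subseteq> L ! i}"

definition facet_type :: "'v set list \<Rightarrow> nat \<Rightarrow> nat" where
  "facet_type L j = card (restriction L j)"

definition layered_order :: "'v set set \<Rightarrow> 'v set \<Rightarrow> 'v set list \<Rightarrow> bool" where
  "layered_order Fs F0 L \<longleftrightarrow> distinct L \<and> set L = Fs \<and>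
     (\<forall>p q i j. p < q \<and> q < length L \<and> L ! p \<in> layer Fs F0 i \<and> L ! q \<in> layer Fs F0 j
        \<longrightarrow> i \<le> j)"

definition comb_equiv :: "'a::euclidean_space set \<Rightarrow> 'b::euclidean_space set \<Rightarrow> bool" where
  "comb_equiv P Q \<longleftrightarrow> (\<exists>f. bij_betw f {F. F face_of P} {G. G face_of Q} \<and>
     (\<forall>F G. F face_of P \<longrightarrow> G face_of P \<longrightarrow> (F \<subseteq> G \<longleftrightarrow> f F \<subseteq> f G)))"

definition crosspolytope :: "(real ^ 'n) set" where
  "crosspolytope = convex hull {x. \<exists>i. x = axis i 1 \<or> x = - axis i 1}"

end

theory Submission
  imports Defs
begin


lemma layers_aux_snd: "snd (layers_aux Fs F0 i) = (\<Union>k\<le>i. layer Fs F0 k)"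
proof (induction i)
  case 0 then show ?case by (simp add: layer_def)
next
  case (Suc i)
  obtain L U where LU: "layers_aux Fs F0 i = (L, U)" by fastforce
  then show ?case using Suc by (auto simp: layer_def atMost_Suc Let_def)
qed

lemma layer_0: "layer Fs F0 0 = {F0}"
  by (simp add: layer_def)

lemma layer_Suc: "layer Fs F0 (Suc i) =
   {F \<in> Fs. F \<notin> (\<Union>k\<le>i. layer Fs F0 k) \<and> (\<exists>G \<in> layer Fs F0 i. share_ridge F G)}"
proof -
  obtain L U where LU: "layers_aux Fs F0 i = (L, U)" by fastforce
  have "L = layer Fs F0 i" using LU by (simp add: layer_def)
  moreover have "U = (\<Union>k\<le>i. layer Fs F0 k)" using LU layers_aux_snd[of Fs F0 i] by simp
  ultimately show ?thesis using LU by (simp add: layer_def Let_def)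
qed

lemma layer_disj: "i < j \<Longrightarrow> F \<in> layer Fs F0 i \<Longrightarrow> F \<notin> layer Fs F0 j"
proof (cases j)
  case 0 then show "i < j \<Longrightarrow> ?thesis" by simp
next
  case (Suc j') then show "i < j \<Longrightarrow> F \<in> layer Fs F0 i \<Longrightarrow> ?thesis"
    by (auto simp: layer_Suc)
qed

lemma layer_unique: "F \<in> layer Fs F0 i \<Longrightarrow> F \<in> layer Fs F0 j \<Longrightarrow> i = j"
  by (metis layer_disj linorder_neqE_nat)

lemma layer_sub: "F0 \<in> Fs \<Longrightarrow> layer Fs F0 i \<subseteq> Fs"
  by (cases i) (auto simp: layer_0 layer_Suc)

lemma layer_nonempty_down: "layer Fs F0 m \<noteq> {} \<Longrightarrow> k \<le> m \<Longrightarrow> layer Fs F0 k \<noteq> {}"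
proof (induction m)
  case 0 then show ?case by simp
next
  case (Suc m)
  then show ?case by (cases "k = Suc m") (auto simp: layer_Suc)
qed

lemma exists_order:
  assumes fin: "finite Fs" and F0: "F0 \<in> Fs" and G: "G \<in> layer Fs F0 m"
    and A: "A \<subseteq> layer Fs F0 m - {G}"
  shows "\<exists>L j. layered_order Fs F0 L \<and> j < length L \<and> L ! j = G \<and>
     (\<forall>H. (\<exists>i<j. L ! i = H) \<longleftrightarrow> H \<in> (\<Union>k<m. layer Fs F0 k) \<union> A)"
proof -
  define lay where "lay F = (LEAST i. F \<in> layer Fs F0 i)" for F
  have lay: "lay F = i" if "F \<in> layer Fs F0 i" for F i
    unfolding lay_def using that by (metis (mono_tags, lifting) LeastI layer_unique)
  define key where "key F = (if \<exists>i. F \<in> layer Fs F0 i then 3 * lay F +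
      (if F \<in> A then 0 else if F = G then 1 else 2) else 3 * m + 3)" for F
  have keyi: "key F = 3 * i + (if F \<in> A then 0 else if F = G then 1 else 2)"
    if "F \<in> layer Fs F0 i" for F i using that lay by (auto simp: key_def)
  obtain xs where xs: "distinct xs" "set xs = Fs" using finite_distinct_list[OF fin] by blast
  define L where "L = sort_key key xs"
  have Ld: "distinct L" and Ls: "set L = Fs" using xs by (auto simp: L_def)
  have sorted: "sorted (map key L)" by (simp add: L_def)
  have mono: "key (L ! p) \<le> key (L ! q)" if "p \<le> q" "q < length L" for p q
    using sorted that by (simp add: sorted_iff_nth_mono)
  have lo: "layered_order Fs F0 L"
    unfolding layered_order_def
  proof (intro conjI Ld Ls allI impI)
    fix p q i j assume h: "p < q \<and> q < length L \<and> L ! p \<in> layer Fs F0 i \<and> L ! q \<in> layer Fs F0 j"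
    then have "key (L ! p) \<le> key (L ! q)" using mono by simp
    then show "i \<le> j" using h keyi[of "L ! p" i] keyi[of "L ! q" j] by (auto split: if_splits)
  qed
  have "G \<in> Fs" using G layer_sub[OF F0] by blast
  then obtain j where j: "j < length L" "L ! j = G" using Ls by (metis in_set_conv_nth)
  have kG: "key G = 3 * m + 1" using keyi[OF G] A by auto
  have "(\<exists>i<j. L ! i = H) \<longleftrightarrow> H \<in> (\<Union>k<m. layer Fs F0 k) \<union> A" for H
  proof
    assume "\<exists>i<j. L ! i = H"
    then obtain i where i: "i < j" "L ! i = H" by blast
    have "H \<noteq> G" using nth_eq_iff_index_eq[OF Ld, of i j] i j by simp
    have "key H \<le> 3 * m + 1" using mono[of i j] i j kG by simp
    show "H \<in> (\<Union>k<m. layer Fs F0 k) \<union> A"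
    proof (cases "\<exists>k. H \<in> layer Fs F0 k")
      case True
      then obtain k where k: "H \<in> layer Fs F0 k" by blast
      have "k < m \<or> (k = m \<and> H \<in> A)"
        using keyi[OF k] \<open>key H \<le> 3 * m + 1\<close> \<open>H \<noteq> G\<close> by (auto split: if_splits)
      then show ?thesis using k by auto
    next
      case False
      then show ?thesis using \<open>key H \<le> 3 * m + 1\<close> by (simp add: key_def)
    qed
  next
    assume H: "H \<in> (\<Union>k<m. layer Fs F0 k) \<union> A"
    then have HF: "H \<in> Fs" using layer_sub[OF F0] A by blast
    have kH: "key H < 3 * m + 1" using H A keyi by fastforce
    obtain i where i: "i < length L" "L ! i = H" using HF Ls by (metis in_set_conv_nth)
    have "i < j" using mono[of j i] i j kH kG by (metis leI leD)
    then show "\<exists>i<j. L ! i = H" using i by blast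
  qed
  then show ?thesis using lo j by blast
qed


lemma type_lemma:
  assumes TH: "\<forall>L. layered_order Fs F0 L \<longrightarrow>
      (\<forall>j < length L. \<forall>i. facet_type L j = i \<longleftrightarrow> L ! j \<in> layer Fs F0 i)"
    and fin: "finite Fs" and F0: "F0 \<in> Fs" and G: "G \<in> layer Fs F0 m"
    and A: "A \<subseteq> layer Fs F0 m - {G}"
  shows "card {v \<in> G. \<exists>H \<in> (\<Union>k<m. layer Fs F0 k) \<union> A. G - {v} \<subseteq> H} = m"
proof -
  from exists_order[OF fin F0 G A] obtain L j where
    LL: "layered_order Fs F0 L \<and> j < length L \<and> L ! j = G \<and>
     (\<forall>H. (\<exists>i<j. L ! i = H) \<longleftrightarrow> H \<in> (\<Union>k<m. layer Fs F0 k) \<union> A)"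
    by (elim exE) (rule that)
  have L: "layered_order Fs F0 L" "j < length L" "L ! j = G" using LL by simp_all
  have E: "(\<exists>i<j. L ! i = H) \<longleftrightarrow> H \<in> (\<Union>k<m. layer Fs F0 k) \<union> A" for H
    using LL by simp
  have "facet_type L j = m"
  proof -
    have h1: "\<forall>j<length L. \<forall>i. facet_type L j = i \<longleftrightarrow> L ! j \<in> layer Fs F0 i"
      using mp[OF spec[OF TH] L(1)] .
    have "facet_type L j = m \<longleftrightarrow> L ! j \<in> layer Fs F0 m"
      using spec[OF mp[OF spec[OF h1, of j] L(2)], of m] .
    then show ?thesis using L(3) G by simp
  qed
  moreover have "restriction L j = {v \<in> G. \<exists>H \<in> (\<Union>k<m. layer Fs F0 k) \<union> A. G - {v} \<subseteq> H}"
  proof -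
    have "(\<exists>i<j. G - {v} \<subseteq> L ! i) \<longleftrightarrow> (\<exists>H \<in> (\<Union>k<m. layer Fs F0 k) \<union> A. G - {v} \<subseteq> H)" for v
    proof
      assume "\<exists>i<j. G - {v} \<subseteq> L ! i"
      then obtain i where "i < j" "G - {v} \<subseteq> L ! i" by blast
      moreover have "L ! i \<in> (\<Union>k<m. layer Fs F0 k) \<union> A" using E[of "L ! i"] \<open>i < j\<close> by blast
      ultimately show "\<exists>H \<in> (\<Union>k<m. layer Fs F0 k) \<union> A. G - {v} \<subseteq> H" by blast
    next
      assume "\<exists>H \<in> (\<Union>k<m. layer Fs F0 k) \<union> A. G - {v} \<subseteq> H"
      then obtain H where H: "H \<in> (\<Union>k<m. layer Fs F0 k) \<union> A" "G - {v} \<subseteq> H" by blast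
      then obtain i where "i < j" "L ! i = H" using E[of H] by blast
      then show "\<exists>i<j. G - {v} \<subseteq> L ! i" using H(2) by blast
    qed
    then show ?thesis unfolding restriction_def L(3) by simp
  qed
  ultimately show ?thesis by (simp add: facet_type_def)
qed

lemma all_in_layers:
  assumes TH: "\<forall>L. layered_order Fs F0 L \<longrightarrow>
      (\<forall>j < length L. \<forall>i. facet_type L j = i \<longleftrightarrow> L ! j \<in> layer Fs F0 i)"
    and fin: "finite Fs" and F0: "F0 \<in> Fs" and H: "H \<in> Fs"
  shows "\<exists>i. H \<in> layer Fs F0 i"
proof -
  obtain L j where L: "layered_order Fs F0 L"
    using exists_order[OF fin F0, of F0 0 "{}"] by (auto simp: layer_0)
  then have "set L = Fs" by (simp add: layered_order_def)
  then obtain j where j: "j < length L" "L ! j = H" using H by (metis in_set_conv_nth)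
  have h1: "\<forall>j<length L. \<forall>i. facet_type L j = i \<longleftrightarrow> L ! j \<in> layer Fs F0 i"
    using mp[OF spec[OF TH] L] .
  have "facet_type L j = facet_type L j \<longleftrightarrow> L ! j \<in> layer Fs F0 (facet_type L j)"
    using spec[OF mp[OF spec[OF h1, of j] j(1)], of "facet_type L j"] .
  then have "L ! j \<in> layer Fs F0 (facet_type L j)" by simp
  then show ?thesis using j by blast
qed

locale shell_setup =
  fixes Fs :: "'v set set" and F0 :: "'v set" and d :: nat
  assumes fin: "finite Fs" and F0: "F0 \<in> Fs" and cardB: "\<And>B. B \<in> Fs \<Longrightarrow> finite B \<and> card B = d"
    and d1: "d \<ge> 1"
    and PM_ex: "\<And>B v. B \<in> Fs \<Longrightarrow> v \<in> B \<Longrightarrow> \<exists>B'\<in>Fs. B' \<noteq> B \<and> B - {v} \<subseteq> B'"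
    and PM_un: "\<And>B v B1 B2. B \<in> Fs \<Longrightarrow> v \<in> B \<Longrightarrow> B1 \<in> Fs \<Longrightarrow> B2 \<in> Fs \<Longrightarrow> B1 \<noteq> B \<Longrightarrow> B2 \<noteq> B
        \<Longrightarrow> B - {v} \<subseteq> B1 \<Longrightarrow> B - {v} \<subseteq> B2 \<Longrightarrow> B1 = B2"
    and TY: "\<And>G m A. G \<in> layer Fs F0 m \<Longrightarrow> A \<subseteq> layer Fs F0 m - {G} \<Longrightarrow>
        card {v \<in> G. \<exists>H \<in> (\<Union>k<m. layer Fs F0 k) \<union> A. G - {v} \<subseteq> H} = m"
    and ALL: "\<And>H. H \<in> Fs \<Longrightarrow> \<exists>i. H \<in> layer Fs F0 i"
begin

lemma ridge_shape:
  assumes B: "B \<in> Fs" and G: "G \<in> Fs" and v: "v \<in> B" and sub: "B - {v} \<subseteq> G" and ne: "G \<noteq> B"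
  shows "\<exists>w. w \<notin> B \<and> G = insert w (B - {v})"
proof -
  have fB: "finite B" "card B = d" and fG: "finite G" "card G = d" using cardB B G by auto
  have "v \<notin> G"
  proof
    assume "v \<in> G"
    then have "B \<subseteq> G" using sub by blast
    then have "B = G" using fB fG by (simp add: card_subset_eq)
    then show False using ne by simp
  qed
  have "card (B - {v}) = d - 1" using fB v by simp
  then have "card (G - (B - {v})) = 1"
    using fG sub d1 by (simp add: card_Diff_subset[OF finite_subset[OF sub fG(1)] sub])
  then obtain w where w: "G - (B - {v}) = {w}" by (meson card_1_singletonE)
  then have "w \<notin> B" using \<open>v \<notin> G\<close> by blast
  moreover have "G = insert w (B - {v})" using w sub by blast
  ultimately show ?thesis by blast
qed

lemma sr_iff:
  assumes F: "F \<in> Fs" and G: "G \<in> Fs"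
  shows "share_ridge F G \<longleftrightarrow> F \<noteq> G \<and> (\<exists>v\<in>G. G - {v} \<subseteq> F)"
proof -
  have fF: "finite F" "card F = d" and fG: "finite G" "card G = d" using cardB F G by auto
  show ?thesis
  proof
    assume h: "share_ridge F G"
    then have ne: "F \<noteq> G" and c: "card (F \<inter> G) + 1 = d" using fF by (auto simp: share_ridge_def)
    have "card (G - (F \<inter> G)) = 1" using c fG by (simp add: card_Diff_subset)
    then obtain v where v: "G - (F \<inter> G) = {v}" by (meson card_1_singletonE)
    then show "F \<noteq> G \<and> (\<exists>v\<in>G. G - {v} \<subseteq> F)" using ne by blast
  next
    assume h: "F \<noteq> G \<and> (\<exists>v\<in>G. G - {v} \<subseteq> F)"
    then obtain v where v: "v \<in> G" "G - {v} \<subseteq> F" by blast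
    obtain w where w: "w \<notin> G" "F = insert w (G - {v})"
      using ridge_shape[OF G F v(1) v(2)] h by blast
    then have "F \<inter> G = G - {v}" by blast
    then have "card (F \<inter> G) + 1 = d" using fG v d1 by simp
    then show "share_ridge F G" using h fF by (simp add: share_ridge_def)
  qed
qed

definition I :: "nat set" where "I = {..<d}"

definition a :: "nat \<Rightarrow> 'v" where "a = (SOME a. bij_betw a I F0)"

lemma a_bij: "bij_betw a I F0"
proof -
  have "\<exists>a. bij_betw a {0..<card F0} F0" using cardB[OF F0] ex_bij_betw_nat_finite by blast
  then have "\<exists>a. bij_betw a I F0" using cardB[OF F0] by (simp add: I_def atLeast0LessThan)
  then show ?thesis unfolding a_def by (rule someI_ex)
qed

lemma a_inj: "inj_on a I" and a_img: "a ` I = F0"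
  using a_bij by (auto simp: bij_betw_def)

definition b :: "nat \<Rightarrow> 'v" where
  "b i = (SOME w. w \<notin> F0 \<and> insert w (F0 - {a i}) \<in> Fs)"

lemma b_ex: assumes "i \<in> I" shows "b i \<notin> F0 \<and> insert (b i) (F0 - {a i}) \<in> Fs"
proof -
  have ai: "a i \<in> F0" using assms a_img by blast
  obtain G where G: "G \<in> Fs" "G \<noteq> F0" "F0 - {a i} \<subseteq> G" using PM_ex[OF F0 ai] by blast
  obtain w where "w \<notin> F0" "G = insert w (F0 - {a i})" using ridge_shape[OF F0 G(1) ai G(3) G(2)] by blast
  then have "\<exists>w. w \<notin> F0 \<and> insert w (F0 - {a i}) \<in> Fs" using G by blast
  then show ?thesis unfolding b_def by (rule someI_ex)
qed

lemma b_notin: "i \<in> I \<Longrightarrow> b i \<notin> F0" using b_ex by simp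

lemma a_in: "i \<in> I \<Longrightarrow> a i \<in> F0" using a_img by blast

lemma ab_ne: "i \<in> I \<Longrightarrow> j \<in> I \<Longrightarrow> a i \<noteq> b j"
  using b_notin[of j] a_in[of i] by auto


definition Bi :: "nat \<Rightarrow> 'v set" where "Bi i = insert (b i) (F0 - {a i})"

lemma Bi_Fs: "i \<in> I \<Longrightarrow> Bi i \<in> Fs" using b_ex by (simp add: Bi_def)

lemma Bi_layer1: assumes i: "i \<in> I" shows "Bi i \<in> layer Fs F0 1"
proof -
  have ai: "a i \<in> F0" using i a_img by blast
  have ne: "Bi i \<noteq> F0" using b_notin[OF i] by (auto simp: Bi_def)
  have "share_ridge (Bi i) F0" using sr_iff[OF Bi_Fs[OF i] F0] ne ai by (auto simp: Bi_def)
  then show ?thesis using ne Bi_Fs[OF i] F0 by (auto simp: layer_Suc layer_0)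
qed

lemma b_inj: "inj_on b I"
proof (rule inj_onI, rule ccontr)
  fix i j assume i: "i \<in> I" and j: "j \<in> I" and bij: "b i = b j" and ij: "i \<noteq> j"
  have aij: "a i \<noteq> a j" using a_inj i j ij by (meson inj_on_contraD)
  have ai: "a i \<in> F0" and aj: "a j \<in> F0" using i j a_img by auto
  have "a j \<in> Bi i" using aij aj by (simp add: Bi_def)
  moreover have "a j \<notin> Bi j" using aj b_notin[OF j] by (auto simp: Bi_def)
  ultimately have neq: "Bi i \<noteq> Bi j" by blast
  have fin: "finite (Bi j)" using cardB Bi_Fs[OF j] by blast
  let ?S = "{v \<in> Bi j. \<exists>H \<in> (\<Union>k<1. layer Fs F0 k) \<union> {Bi i}. Bi j - {v} \<subseteq> H}"
  have c1: "card ?S = 1" using TY[OF Bi_layer1[OF j], of "{Bi i}"] Bi_layer1[OF i] neq by auto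
  have m1: "b j \<in> ?S" using b_notin[OF j] by (auto simp: Bi_def layer_0)
  have m2: "a i \<in> ?S" using bij aij ai by (auto simp: Bi_def)
  have ne: "b j \<noteq> a i" using ab_ne i j by metis
  obtain x where x: "?S = {x}" using c1 card_1_singletonE by blast
  have "b j = x" using m1 unfolding x by simp
  moreover have "a i = x" using m2 unfolding x by simp
  ultimately show False using ne by simp
qed

definition T :: "nat set \<Rightarrow> 'v set" where "T S = a ` (I - S) \<union> b ` S"

lemma aT: "j \<in> I \<Longrightarrow> S \<subseteq> I \<Longrightarrow> a j \<in> T S \<longleftrightarrow> j \<notin> S"
  unfolding T_def using a_inj ab_ne by (auto simp: inj_on_eq_iff)

lemma bT: "j \<in> I \<Longrightarrow> S \<subseteq> I \<Longrightarrow> b j \<in> T S \<longleftrightarrow> j \<in> S"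
  unfolding T_def using b_inj ab_ne by (auto simp: inj_on_eq_iff) (metis ab_ne subsetD)

lemma T_cases: "x \<in> T S \<Longrightarrow> (\<exists>j\<in>I - S. x = a j) \<or> (\<exists>j\<in>S. x = b j)"
  unfolding T_def by auto

lemma T_sub: "S \<subseteq> I \<Longrightarrow> T S \<subseteq> a ` I \<union> b ` I"
  unfolding T_def by auto

lemma T_empty: "T {} = F0" by (simp add: T_def a_img)

lemma a_eq: "i \<in> I \<Longrightarrow> j \<in> I \<Longrightarrow> a i = a j \<longleftrightarrow> i = j"
  using a_inj by (auto simp: inj_on_eq_iff)

lemma b_eq: "i \<in> I \<Longrightarrow> j \<in> I \<Longrightarrow> b i = b j \<longleftrightarrow> i = j"
  using b_inj by (auto simp: inj_on_eq_iff)

lemma T_insert: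
  assumes i: "i \<in> I" "i \<notin> S" and S: "S \<subseteq> I"
  shows "T (insert i S) = insert (b i) (T S - {a i})"
proof (intro set_eqI iffI)
  fix x assume "x \<in> T (insert i S)"
  then consider (A) j where "j \<in> I - insert i S" "x = a j" | (B) j where "j \<in> insert i S" "x = b j"
    using T_cases by blast
  then show "x \<in> insert (b i) (T S - {a i})"
  proof cases
    case A then show ?thesis using aT[of j S] S a_eq[of j i] i by auto
  next
    case B then show ?thesis using bT[of j S] S ab_ne[of i j] i by auto
  qed
next
  fix x assume x: "x \<in> insert (b i) (T S - {a i})"
  have Si: "insert i S \<subseteq> I" using S i by auto
  show "x \<in> T (insert i S)"
  proof (cases "x = b i")
    case True then show ?thesis using bT[OF i(1) Si] by simp
  next
    case False
    then have x': "x \<in> T S" "x \<noteq> a i" using x by auto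
    then consider (A) j where "j \<in> I - S" "x = a j" | (B) j where "j \<in> S" "x = b j"
      using T_cases by blast
    then show ?thesis
    proof cases
      case A then show ?thesis using aT[of j "insert i S"] Si x' by auto
    next
      case B then show ?thesis using bT[of j "insert i S"] Si S by auto
    qed
  qed
qed

lemma T_remove:
  assumes j: "j \<in> S" and S: "S \<subseteq> I"
  shows "T (S - {j}) = insert (a j) (T S - {b j})"
proof (intro set_eqI iffI)
  have jI: "j \<in> I" using j S by blast
  have Sj: "S - {j} \<subseteq> I" using S by blast
  {
    fix x assume "x \<in> T (S - {j})"
    then consider (A) k where "k \<in> I - (S - {j})" "x = a k" | (B) k where "k \<in> S - {j}" "x = b k"
      using T_cases by blast
    then show "x \<in> insert (a j) (T S - {b j})"
    proof cases
      case A then show ?thesis using aT[of k S] S ab_ne[of k j] jI by auto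
    next
      case B then show ?thesis using bT[of k S] S b_eq[of k j] jI by auto
    qed
  }
  {
    fix x assume x: "x \<in> insert (a j) (T S - {b j})"
    show "x \<in> T (S - {j})"
    proof (cases "x = a j")
      case True then show ?thesis using aT[OF jI Sj] by simp
    next
      case False
      then have x': "x \<in> T S" "x \<noteq> b j" using x by auto
      then consider (A) k where "k \<in> I - S" "x = a k" | (B) k where "k \<in> S" "x = b k"
        using T_cases by blast
      then show ?thesis
      proof cases
        case A then show ?thesis using aT[of k "S - {j}"] Sj by auto
      next
        case B then show ?thesis using bT[of k "S - {j}"] Sj S x' by auto
      qed
    qed
  }
qed

lemma T_single: "i \<in> I \<Longrightarrow> T {i} = Bi i"
  using T_insert[of i "{}"] T_empty by (simp add: Bi_def)

lemma T_inj: assumes S: "S \<subseteq> I" and X: "X \<subseteq> I" and e: "T S = T X" shows "S = X"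
proof (intro set_eqI iffI)
  fix j assume "j \<in> S" then show "j \<in> X" using bT[of j S] bT[of j X] S X e by auto
next
  fix j assume "j \<in> X" then show "j \<in> S" using bT[of j S] bT[of j X] S X e by auto
qed

lemma T_card: "S \<subseteq> I \<Longrightarrow> card (T S) = d"
proof -
  assume S: "S \<subseteq> I"
  have "finite I" by (simp add: I_def)
  have disj: "a ` (I - S) \<inter> b ` S = {}" using ab_ne S by blast
  have "card (T S) = card (a ` (I - S)) + card (b ` S)"
    unfolding T_def using disj \<open>finite I\<close> S by (simp add: card_Un_disjoint finite_subset)
  also have "\<dots> = card (I - S) + card S"
    using card_image inj_on_subset[OF a_inj] inj_on_subset[OF b_inj] S by (metis Diff_subset)
  also have "\<dots> = d"
  proof -
    have "card S \<le> d" using card_mono[of I S] S by (simp add: I_def)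
    then show ?thesis using S \<open>finite I\<close> by (simp add: card_Diff_subset finite_subset I_def)
  qed
  finally show ?thesis .
qed

lemma T_cont:
  assumes S: "S \<subseteq> I" and X: "X \<subseteq> I" and i: "i \<in> I" "i \<notin> S" and sub: "T S - {a i} \<subseteq> T X"
  shows "S \<subseteq> X \<and> X \<subseteq> insert i S"
proof
  show "S \<subseteq> X"
  proof
    fix j assume j: "j \<in> S"
    have jI: "j \<in> I" using j S by blast
    have "b j \<in> T S - {a i}" using bT[of j S] j S ab_ne[OF i(1) jI] jI by auto
    then show "j \<in> X" using sub bT[of j X] X j S by auto
  qed
  show "X \<subseteq> insert i S"
  proof
    fix j assume j: "j \<in> X"
    show "j \<in> insert i S"
    proof (rule ccontr)
      assume "j \<notin> insert i S"
      then have "a j \<in> T S - {a i}" using aT[of j S] j X S i a_inj by (auto simp: inj_on_eq_iff)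
      then show False using sub aT[of j X] j X by auto
    qed
  qed
qed

definition Tk :: "nat \<Rightarrow> 'v set set" where "Tk k = {T S | S. S \<subseteq> I \<and> card S = k}"

lemma finI: "finite I" by (simp add: I_def)

lemma layer_Fs: "layer Fs F0 k \<subseteq> Fs" using layer_sub[OF F0] .

lemma layer_Suc_mem: "G \<in> layer Fs F0 (Suc k) \<longleftrightarrow>
   G \<in> Fs \<and> G \<notin> (\<Union>k'\<le>k. layer Fs F0 k') \<and> (\<exists>H \<in> layer Fs F0 k. share_ridge G H)"
  by (simp add: layer_Suc)

lemma layer_step_sub:
  assumes k: "k < d" and IH: "\<And>k'. k' \<le> k \<Longrightarrow> layer Fs F0 k' = Tk k'"
  shows "layer Fs F0 (Suc k) \<subseteq> Tk (Suc k)"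
proof
  fix G assume G: "G \<in> layer Fs F0 (Suc k)"
  then have GF: "G \<in> Fs" and Gn: "G \<notin> (\<Union>k'\<le>k. layer Fs F0 k')"
    and "\<exists>H \<in> layer Fs F0 k. share_ridge G H" using layer_Suc_mem by blast+
  then obtain S where S: "S \<subseteq> I" "card S = k" "share_ridge G (T S)"
    using IH[of k] by (auto simp: Tk_def)
  have inF: "T X \<in> Fs" if "X \<subseteq> I" "card X \<le> k" for X
  proof -
    have "T X \<in> layer Fs F0 (card X)" using IH[of "card X"] that unfolding Tk_def by blast
    then show ?thesis using layer_Fs by blast
  qed
  have notE: "G \<noteq> T X" if "X \<subseteq> I" "card X \<le> k" for X
  proof
    assume "G = T X"
    then have "G \<in> layer Fs F0 (card X)" using IH[of "card X"] that unfolding Tk_def by blast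
    then show False using Gn that by blast
  qed
  have TSF: "T S \<in> Fs" using inF S by simp
  have finS: "finite S" using S(1) finI finite_subset by blast
  obtain v where v: "v \<in> T S" "T S - {v} \<subseteq> G" and GneT: "G \<noteq> T S"
    using sr_iff[OF GF TSF] S(3) by blast
  from T_cases[OF v(1)] show "G \<in> Tk (Suc k)"
  proof (elim disjE bexE)
    fix j assume j: "j \<in> S" "v = b j"
    have S1: "S - {j} \<subseteq> I" "card (S - {j}) \<le> k" using S j finS by auto
    have F1: "T (S - {j}) \<in> Fs" using inF[OF S1] .
    have sub: "T S - {b j} \<subseteq> T (S - {j})" using T_remove[OF j(1) S(1)] by blast
    have ne: "T (S - {j}) \<noteq> T S" using T_inj[OF S1(1) S(1)] j by blast
    have "G = T (S - {j})" using PM_un[OF TSF v(1) GF F1 GneT ne] v(2) sub j(2) by simp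
    then show ?thesis using notE[OF S1] by simp
  next
    fix i assume i: "i \<in> I - S" "v = a i"
    have iI: "i \<in> I" "i \<notin> S" using i by auto
    obtain w where w: "w \<notin> T S" "G = insert w (T S - {a i})"
      using ridge_shape[OF TSF GF v(1) v(2) GneT] i(2) by blast
    have Si: "insert i S \<subseteq> I" "card (insert i S) = Suc k" using S iI finS by auto
    have goal: "G = T (insert i S)"
    proof (cases "k = 0")
      case True
      then have "S = {}" using S finS by simp
      then have TS: "T S = F0" by (simp add: T_empty)
      have Bi: "T (insert i S) \<in> Fs" using Bi_Fs[OF iI(1)] T_single[OF iI(1)] \<open>S = {}\<close> by simp
      have ne: "T (insert i S) \<noteq> T S" using T_inj[OF Si(1) S(1)] iI by blast
      have sub: "T S - {a i} \<subseteq> T (insert i S)" using T_insert[OF iI S(1)] by blast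
      show ?thesis using PM_un[OF TSF v(1) GF Bi GneT ne] v(2) sub i(2) by simp
    next
      case False
      show ?thesis
      proof (cases "w = b i")
        case True then show ?thesis using w(2) T_insert[OF iI S(1)] by simp
      next
        case wne: False
        show ?thesis
        proof (cases "w \<in> a ` I")
          case True
          then obtain j where j: "j \<in> I" "w = a j" by blast
          have jS: "j \<in> S" using aT[OF j(1) S(1)] w(1) j(2) by blast
          have ij: "i \<noteq> j" using iI jS by blast
          define S' where "S' = S - {j}"
          have S'I: "S' \<subseteq> I" "card S' \<le> k" using S finS card_Diff1_le[of S j] by (auto simp: S'_def)
          have iS': "i \<notin> S'" using iI by (simp add: S'_def)
          have S'iI: "insert i S' \<subseteq> I" "card (insert i S') \<le> k"
          proof -
            have "card S > 0" using finS jS by (auto simp: card_gt_0_iff)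
            then show "insert i S' \<subseteq> I" "card (insert i S') \<le> k"
              using S'I iI finS jS S by (auto simp: S'_def card_insert_if)
          qed
          have BF: "T S' \<in> Fs" using inF[OF S'I] .
          have B2F: "T (insert i S') \<in> Fs" using inF[OF S'iI] .
          have ai: "a i \<in> T S'" using aT[OF iI(1) S'I(1)] iS' by simp
          have eS': "T S' = insert (a j) (T S - {b j})" using T_remove[OF jS S(1)] by (simp add: S'_def)
          have aij: "a j \<noteq> a i" using a_eq[OF j(1) iI(1)] ij by simp
          have sub1: "T S' - {a i} \<subseteq> G" using eS' w(2) j(2) by blast
          have sub2: "T S' - {a i} \<subseteq> T (insert i S')" using T_insert[OF iI(1) iS' S'I(1)] by blast
          have bjG: "b j \<in> G" using bT[OF j(1) S(1)] jS w(2) ab_ne[OF iI(1) j(1)] by auto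
          have bjn: "b j \<notin> T S'" using bT[OF j(1) S'I(1)] by (simp add: S'_def)
          have ne1: "G \<noteq> T S'" using bjG bjn by blast
          have ne2: "T (insert i S') \<noteq> T S'" using T_inj[OF S'iI(1) S'I(1)] iS' by blast
          have "G = T (insert i S')" using PM_un[OF BF ai GF B2F ne1 ne2 sub1 sub2] .
          then show ?thesis using notE[OF S'iI] by simp
        next
          case wa: False
          let ?R = "{v \<in> G. \<exists>H \<in> (\<Union>k'<Suc k. layer Fs F0 k') \<union> {}. G - {v} \<subseteq> H}"
          have cR: "card ?R = Suc k" using TY[OF G, of "{}"] by simp
          have "?R \<subseteq> {w}"
          proof
            fix v' assume v': "v' \<in> ?R"
            show "v' \<in> {w}"
            proof (rule ccontr)
              assume vw: "v' \<notin> {w}"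
              obtain H k' where H: "k' < Suc k" "H \<in> layer Fs F0 k'" "G - {v'} \<subseteq> H" using v' by blast
              obtain X where X: "X \<subseteq> I" "card X = k'" "H = T X"
                using IH[of k'] H(1,2) by (auto simp: Tk_def)
              have "w \<in> T X" using H(3) X(3) vw w(2) by blast
              then obtain j where j: "j \<in> X" "w = b j" using T_cases wa by blast
              have jI: "j \<in> I" using j X by blast
              have jS: "j \<notin> S" using bT[OF jI S(1)] w(1) j(2) by blast
              have ji: "j \<noteq> i" using j(2) wne by blast
              have ajG: "a j \<in> G" using aT[OF jI S(1)] jS w(2) a_eq[OF jI iI(1)] ji by auto
              have ajX: "a j \<notin> T X" using aT[OF jI X(1)] j(1) by simp
              have vaj: "v' = a j" using ajG ajX H(3) X(3) by blast
              have "S \<subseteq> X"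
              proof
                fix s assume s: "s \<in> S"
                have sI: "s \<in> I" using s S by blast
                have "b s \<in> G" using bT[OF sI S(1)] s w(2) ab_ne[OF iI(1) sI] by auto
                moreover have "b s \<noteq> a j" using ab_ne[OF jI sI] by metis
                ultimately have "b s \<in> T X" using H(3) X(3) vaj by blast
                then show "s \<in> X" using bT[OF sI X(1)] by simp
              qed
              then have "insert j S \<subseteq> X" using j by blast
              then have "card (insert j S) \<le> card X" using X(1) finI card_mono finite_subset by metis
              then show False using jS finS S(2) X(2) H(1) by simp
            qed
          qed
          then have "card ?R \<le> 1" using card_mono[of "{w}" ?R] by simp
          then show ?thesis using cR False by simp
        qed
      qed
    qed
    show ?thesis using goal Si unfolding Tk_def by blast
  qed
qed

lemma layer_step_sup:
  assumes k: "k < d" and IH: "\<And>k'. k' \<le> k \<Longrightarrow> layer Fs F0 k' = Tk k'"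
  shows "Tk (Suc k) \<subseteq> layer Fs F0 (Suc k)"
proof
  fix Y assume "Y \<in> Tk (Suc k)"
  then obtain S' where S': "S' \<subseteq> I" "card S' = Suc k" "Y = T S'" by (auto simp: Tk_def)
  have finS': "finite S'" using S'(1) finI finite_subset by blast
  obtain i where i: "i \<in> S'" using S'(2) by (metis card.empty ex_in_conv nat.distinct(1))
  define S where "S = S' - {i}"
  have S: "S \<subseteq> I" "card S = k" "i \<notin> S" "S' = insert i S" "i \<in> I"
    using S' i finS' by (auto simp: S_def)
  have finS: "finite S" using finS' by (simp add: S_def)
  have TSl: "T S \<in> layer Fs F0 k" using IH[of k] S by (auto simp: Tk_def)
  have TSF: "T S \<in> Fs" using TSl layer_Fs by blast
  have ai: "a i \<in> T S" using aT[OF S(5) S(1)] S(3) by simp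
  obtain G where G: "G \<in> Fs" "G \<noteq> T S" "T S - {a i} \<subseteq> G" using PM_ex[OF TSF ai] by blast
  have notE: "G \<notin> (\<Union>k'\<le>k. layer Fs F0 k')"
  proof
    assume "G \<in> (\<Union>k'\<le>k. layer Fs F0 k')"
    then obtain k' where "k' \<le> k" "G \<in> layer Fs F0 k'" by blast
    then obtain X where X: "X \<subseteq> I" "card X = k'" "G = T X" "k' \<le> k" using IH[of k'] by (auto simp: Tk_def)
    have c: "S \<subseteq> X \<and> X \<subseteq> insert i S" using T_cont[OF S(1) X(1) S(5) S(3)] G(3) X(3) by simp
    show False
    proof (cases "i \<in> X")
      case True
      then have "X = insert i S" using c by blast
      then show ?thesis using X S finS by simp
    next
      case False
      then have "X = S" using c by blast
      then show ?thesis using G(2) X(3) by simp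
    qed
  qed
  have sr: "share_ridge G (T S)" using sr_iff[OF G(1) TSF] G ai by blast
  have Gl: "G \<in> layer Fs F0 (Suc k)" using layer_Suc_mem G(1) notE sr TSl by blast
  then have "G \<in> Tk (Suc k)" using layer_step_sub[OF k IH] by blast
  then obtain X where X: "X \<subseteq> I" "card X = Suc k" "G = T X" by (auto simp: Tk_def)
  have c: "S \<subseteq> X \<and> X \<subseteq> insert i S" using T_cont[OF S(1) X(1) S(5) S(3)] G(3) X(3) by simp
  have "X = insert i S"
    using c X(2) S finS card_subset_eq[of "insert i S" X] by simp
  then show "Y \<in> layer Fs F0 (Suc k)" using Gl X(3) S'(3) S(4) by simp
qed

lemma layer_eq: "k \<le> d \<Longrightarrow> layer Fs F0 k = Tk k"
proof (induction k rule: less_induct)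
  case (less k)
  show ?case
  proof (cases k)
    case 0
    have "Tk 0 = {T {}}" using finI by (auto simp: Tk_def finite_subset)
    then show ?thesis using 0 by (simp add: layer_0 T_empty)
  next
    case (Suc k')
    have IH: "\<And>k''. k'' \<le> k' \<Longrightarrow> layer Fs F0 k'' = Tk k''" using less Suc by simp
    have "k' < d" using less Suc by simp
    then show ?thesis using layer_step_sub[OF _ IH] layer_step_sup[OF _ IH] Suc by blast
  qed
qed

lemma T_Fs: "S \<subseteq> I \<Longrightarrow> T S \<in> Fs"
proof -
  assume S: "S \<subseteq> I"
  have "card S \<le> d" using card_mono[OF finI S] by (simp add: I_def)
  then have "T S \<in> layer Fs F0 (card S)" using layer_eq S by (auto simp: Tk_def)
  then show ?thesis using layer_Fs by blast
qed

lemma Fs_eq: "Fs = {T S | S. S \<subseteq> I}"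
proof
  show "{T S | S. S \<subseteq> I} \<subseteq> Fs" using T_Fs by blast
next
  show "Fs \<subseteq> {T S | S. S \<subseteq> I}"
  proof
    fix H assume H: "H \<in> Fs"
    obtain m where m: "H \<in> layer Fs F0 m" using ALL[OF H] by blast
    show "H \<in> {T S | S. S \<subseteq> I}"
    proof (cases "m \<le> d")
      case True then show ?thesis using m layer_eq by (auto simp: Tk_def)
    next
      case False
      then have "layer Fs F0 (Suc d) \<noteq> {}" using layer_nonempty_down[of Fs F0 m "Suc d"] m by auto
      then obtain G where G: "G \<in> layer Fs F0 (Suc d)" by blast
      then have GF: "G \<in> Fs" and Gn: "G \<notin> (\<Union>k'\<le>d. layer Fs F0 k')"
        and "\<exists>H \<in> layer Fs F0 d. share_ridge G H" using layer_Suc_mem by blast+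
      then obtain S where S: "S \<subseteq> I" "card S = d" "share_ridge G (T S)"
        using layer_eq[of d] by (auto simp: Tk_def)
      have SI: "S = I" using S card_subset_eq[OF finI S(1)] by (simp add: I_def)
      have TF: "T I \<in> Fs" using T_Fs by simp
      obtain v where v: "v \<in> T I" "T I - {v} \<subseteq> G" and GneT: "G \<noteq> T I"
        using sr_iff[OF GF TF] S(3) SI by blast
      obtain j where j: "j \<in> I" "v = b j" using T_cases[OF v(1)] by blast
      have S1: "I - {j} \<subseteq> I" by blast
      have F1: "T (I - {j}) \<in> Fs" using T_Fs[OF S1] .
      have sub: "T I - {b j} \<subseteq> T (I - {j})" using T_remove[OF j(1)] by blast
      have ne: "T (I - {j}) \<noteq> T I" using T_inj[OF S1] j by blast
      have GT: "G = T (I - {j})" using PM_un[OF TF v(1) GF F1 GneT ne] v(2) sub j(2) by simp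
      have "card (I - {j}) \<le> d" using j finI by (simp add: I_def)
      then have "G \<in> layer Fs F0 (card (I - {j}))" using GT layer_eq[of "card (I - {j})"] S1 by (auto simp: Tk_def)
      then show ?thesis using Gn \<open>card (I - {j}) \<le> d\<close> by blast
    qed
  qed
qed

lemma comb_structure:
  "\<exists>a b. inj_on a {..<d} \<and> inj_on b {..<d} \<and> (\<forall>i\<in>{..<d}. \<forall>j\<in>{..<d}. a i \<noteq> b j) \<and>
     Fs = {a ` ({..<d} - S) \<union> b ` S | S. S \<subseteq> {..<d}}"
  using a_inj b_inj ab_ne Fs_eq unfolding T_def I_def by blast

end


definition ext :: "'a::euclidean_space set \<Rightarrow> 'a set" where
  "ext S = {v. v extreme_point_of S}"

definition VF :: "'a::euclidean_space set \<Rightarrow> 'a set set" where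
  "VF P = {ext F | F. F face_of P}"

lemma face_hull_ext:
  assumes "polytope P" "F face_of P" shows "F = convex hull (ext F)"
proof -
  have "polytope F" using face_of_polytope_polytope assms by blast
  then show ?thesis unfolding ext_def
    using Krein_Milman_Minkowski polytope_imp_compact polytope_imp_convex by blast
qed

lemma face_ext_sub: "F face_of P \<Longrightarrow> ext F \<subseteq> ext P"
  unfolding ext_def using extreme_point_of_face by blast

lemma face_sub_iff:
  assumes P: "polytope P" and F: "F face_of P" and G: "G face_of P"
  shows "F \<subseteq> G \<longleftrightarrow> ext F \<subseteq> ext G"
proof
  assume FG: "F \<subseteq> G"
  have "F face_of G" using face_of_subset[OF F FG face_of_imp_subset[OF G]] .
  then show "ext F \<subseteq> ext G" by (rule face_ext_sub)
next
  assume "ext F \<subseteq> ext G"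
  then have "convex hull (ext F) \<subseteq> convex hull (ext G)" by (rule hull_mono)
  then show "F \<subseteq> G" using face_hull_ext[OF P F] face_hull_ext[OF P G] by simp
qed

lemma comb_equiv_vert:
  fixes P :: "'a::euclidean_space set" and Q :: "'b::euclidean_space set"
  assumes P: "polytope P" and Q: "polytope Q"
    and phi: "bij_betw \<phi> (ext P) (ext Q)"
    and V: "\<And>S. S \<subseteq> ext P \<Longrightarrow> (S \<in> VF P \<longleftrightarrow> \<phi> ` S \<in> VF Q)"
  shows "comb_equiv P Q"
proof -
  define f where "f F = convex hull (\<phi> ` ext F)" for F
  have inj: "inj_on \<phi> (ext P)" using phi by (simp add: bij_betw_def)
  have img: "\<phi> ` ext P = ext Q" using phi by (simp add: bij_betw_def)
  have fF: "f F face_of Q \<and> ext (f F) = \<phi> ` ext F" if F: "F face_of P" for F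
  proof -
    have "ext F \<in> VF P" using F by (auto simp: VF_def)
    then have "\<phi> ` ext F \<in> VF Q" using V[OF face_ext_sub[OF F]] by simp
    then obtain G where G: "G face_of Q" "ext G = \<phi> ` ext F" by (auto simp: VF_def)
    have "f F = G" using face_hull_ext[OF Q G(1)] G(2) by (simp add: f_def)
    then show ?thesis using G by simp
  qed
  have ord: "F \<subseteq> G \<longleftrightarrow> f F \<subseteq> f G" if F: "F face_of P" and G: "G face_of P" for F G
  proof -
    have "F \<subseteq> G \<longleftrightarrow> ext F \<subseteq> ext G" using face_sub_iff[OF P F G] .
    also have "\<dots> \<longleftrightarrow> \<phi> ` ext F \<subseteq> \<phi> ` ext G"
      using inj_on_image_subset_iff[OF inj face_ext_sub[OF F] face_ext_sub[OF G]] by simp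
    also have "\<dots> \<longleftrightarrow> ext (f F) \<subseteq> ext (f G)" using fF[OF F] fF[OF G] by simp
    also have "\<dots> \<longleftrightarrow> f F \<subseteq> f G" using face_sub_iff[OF Q] fF[OF F] fF[OF G] by simp
    finally show ?thesis .
  qed
  have bij: "bij_betw f {F. F face_of P} {G. G face_of Q}"
    unfolding bij_betw_def
  proof (intro conjI)
    show "inj_on f {F. F face_of P}"
    proof (rule inj_onI)
      fix F G assume F: "F \<in> {F. F face_of P}" and G: "G \<in> {F. F face_of P}" and e: "f F = f G"
      then show "F = G" using ord[of F G] ord[of G F] by auto
    qed
    show "f ` {F. F face_of P} = {G. G face_of Q}"
    proof
      show "f ` {F. F face_of P} \<subseteq> {G. G face_of Q}" using fF by blast
      show "{G. G face_of Q} \<subseteq> f ` {F. F face_of P}"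
      proof
        fix G assume "G \<in> {G. G face_of Q}"
        then have G: "G face_of Q" by simp
        define S where "S = inv_into (ext P) \<phi> ` ext G"
        have SP: "S \<subseteq> ext P" unfolding S_def using face_ext_sub[OF G] img
          by (metis image_subsetI inv_into_into subsetD)
        have phS: "\<phi> ` S = ext G" unfolding S_def using face_ext_sub[OF G] img
          by (simp add: image_inv_into_cancel)
        have "ext G \<in> VF Q" using G by (auto simp: VF_def)
        then have "S \<in> VF P" using V[OF SP] phS by simp
        then obtain F where F: "F face_of P" "ext F = S" by (auto simp: VF_def)
        have "f F = G" using face_hull_ext[OF Q G] F(2) phS by (simp add: f_def)
        then show "G \<in> f ` {F. F face_of P}" using F by blast
      qed
    qed
  qed
  show ?thesis unfolding comb_equiv_def using bij ord by blast
qed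

definition cverts :: "(real ^ 'n) set" where
  "cverts = {x. \<exists>i. x = axis i 1 \<or> x = - axis i 1}"

definition afree :: "(real ^ 'n) set \<Rightarrow> bool" where
  "afree S \<longleftrightarrow> (\<forall>i. \<not> (axis i 1 \<in> S \<and> - axis i 1 \<in> S))"

lemma cverts_finite: "finite (cverts :: (real ^ 'n) set)"
proof -
  have eq: "(cverts :: (real ^ 'n) set) = range (\<lambda>i::'n. axis i (1::real)) \<union> range (\<lambda>i. - axis i 1)"
    unfolding cverts_def by blast
  have f1: "finite (range (\<lambda>i::'n. axis i (1::real)))" by (rule finite_imageI) simp
  have f2: "finite (range (\<lambda>i::'n. - axis i (1::real)))" by (rule finite_imageI) simp
  show ?thesis unfolding eq by (rule finite_UnI[OF f1 f2])
qed

lemma cross_eq: "crosspolytope = convex hull cverts"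
  by (simp add: crosspolytope_def cverts_def)

lemma axis_neg_ne: "axis i (1::real) \<noteq> - axis j 1"
proof
  assume "axis i (1::real) = - axis j 1"
  then have "axis i (1::real) $ i = (- axis j 1) $ i" by simp
  then show False by (cases "i = j") (auto simp: axis_def)
qed

lemma support_hull:
  fixes V :: "'a::euclidean_space set"
  assumes fin: "finite V" and le: "\<And>v. v \<in> V \<Longrightarrow> c \<bullet> v \<le> \<beta>"
  shows "convex hull V \<inter> {x. c \<bullet> x = \<beta>} = convex hull {v \<in> V. c \<bullet> v = \<beta>}"
    and "convex hull V \<inter> {x. c \<bullet> x = \<beta>} face_of convex hull V"
proof -
  have hle: "\<And>x. x \<in> convex hull V \<Longrightarrow> c \<bullet> x \<le> \<beta>"
  proof -
    have "convex hull V \<subseteq> {x. c \<bullet> x \<le> \<beta>}"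
      using le by (intro hull_minimal) (auto simp: convex_halfspace_le)
    then show "\<And>x. x \<in> convex hull V \<Longrightarrow> c \<bullet> x \<le> \<beta>" by blast
  qed
  show F: "convex hull V \<inter> {x. c \<bullet> x = \<beta>} face_of convex hull V"
    using face_of_Int_supporting_hyperplane_le[OF convex_convex_hull] hle by blast
  have P: "polytope (convex hull V)" using fin by (simp add: polytope_convex_hull)
  show "convex hull V \<inter> {x. c \<bullet> x = \<beta>} = convex hull {v \<in> V. c \<bullet> v = \<beta>}"
  proof
    let ?F = "convex hull V \<inter> {x. c \<bullet> x = \<beta>}"
    have "ext ?F \<subseteq> {v \<in> V. c \<bullet> v = \<beta>}"
    proof
      fix v assume "v \<in> ext ?F"
      then have "v extreme_point_of convex hull V" "v \<in> ?F"
        using extreme_point_of_face[OF F] by (auto simp: ext_def)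
      then show "v \<in> {v \<in> V. c \<bullet> v = \<beta>}" using extreme_point_of_convex_hull by blast
    qed
    then have "convex hull ext ?F \<subseteq> convex hull {v \<in> V. c \<bullet> v = \<beta>}" by (rule hull_mono)
    then show "?F \<subseteq> convex hull {v \<in> V. c \<bullet> v = \<beta>}" using face_hull_ext[OF P F] by simp
  next
    have "convex hull {v \<in> V. c \<bullet> v = \<beta>} \<subseteq> convex hull V" by (rule hull_mono) blast
    moreover have "convex hull {v \<in> V. c \<bullet> v = \<beta>} \<subseteq> {x. c \<bullet> x = \<beta>}"
      by (intro hull_minimal) (auto simp: convex_hyperplane)
    ultimately show "convex hull {v \<in> V. c \<bullet> v = \<beta>} \<subseteq> convex hull V \<inter> {x. c \<bullet> x = \<beta>}" by blast
  qed
qed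

definition cvec :: "(real ^ 'n) set \<Rightarrow> real ^ 'n" where
  "cvec S = (\<chi> i. if axis i 1 \<in> S then 1 else if - axis i 1 \<in> S then -1 else 0)"

lemma cvec_le:
  assumes "afree S" and "v \<in> cverts"
  shows "cvec S \<bullet> v \<le> 1 \<and> (cvec S \<bullet> v = 1 \<longleftrightarrow> v \<in> S)"
proof -
  obtain i where "v = axis i 1 \<or> v = - axis i 1" using assms(2) by (auto simp: cverts_def)
  then show ?thesis
  proof
    assume v: "v = axis i 1"
    show ?thesis using v by (simp add: cvec_def inner_axis)
  next
    assume v: "v = - axis i 1"
    show ?thesis using v assms(1) by (auto simp: cvec_def inner_axis afree_def)
  qed
qed

lemma afree_face:
  assumes af: "afree S" and S: "S \<subseteq> cverts"
  shows "convex hull S face_of crosspolytope"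
    and "convex hull S = crosspolytope \<inter> {x. cvec S \<bullet> x = 1}"
proof -
  have e: "{v \<in> cverts. cvec S \<bullet> v = 1} = S" using cvec_le[OF af] S by auto
  have h: "convex hull cverts \<inter> {x. cvec S \<bullet> x = 1} = convex hull {v \<in> cverts. cvec S \<bullet> v = 1}"
    using support_hull(1)[OF cverts_finite, of "cvec S" 1] cvec_le[OF af] by blast
  show "convex hull S = crosspolytope \<inter> {x. cvec S \<bullet> x = 1}"
    unfolding cross_eq h e ..
  have "convex hull cverts \<inter> {x. cvec S \<bullet> x = 1} face_of convex hull cverts"
    using support_hull(2)[OF cverts_finite, of "cvec S" 1] cvec_le[OF af] by blast
  then show "convex hull S face_of crosspolytope"
    unfolding cross_eq h e .
qed

lemma ext_cross: "ext (crosspolytope :: (real ^ 'n) set) = cverts"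
proof
  show "ext (crosspolytope :: (real ^ 'n) set) \<subseteq> cverts"
    unfolding ext_def cross_eq using extreme_point_of_convex_hull by blast
  show "cverts \<subseteq> ext (crosspolytope :: (real ^ 'n) set)"
  proof
    fix v :: "real ^ 'n" assume v: "v \<in> cverts"
    have "afree {v}" unfolding afree_def using axis_neg_ne by (metis singletonD)
    then have "{v} face_of (crosspolytope :: (real ^ 'n) set)" using afree_face(1)[of "{v}"] v by simp
    then show "v \<in> ext (crosspolytope :: (real ^ 'n) set)" by (simp add: ext_def face_of_singleton)
  qed
qed

lemma ext_afree:
  assumes af: "afree S" and S: "S \<subseteq> cverts"
  shows "ext (convex hull S) = S"
proof
  show "ext (convex hull S) \<subseteq> S" unfolding ext_def using extreme_point_of_convex_hull by blast
  show "S \<subseteq> ext (convex hull S)"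
    using extreme_point_of_face[OF afree_face(1)[OF af S]] ext_cross S hull_subset[of S convex]
    by (auto simp: ext_def)
qed

lemma VF_cross: "VF (crosspolytope :: (real ^ 'n) set) = {cverts} \<union> {S. S \<subseteq> cverts \<and> afree S}"
proof -
  have EC: "ext (crosspolytope :: (real ^ 'n) set) = cverts" by (rule ext_cross)
  show ?thesis
proof
  show "VF (crosspolytope :: (real ^ 'n) set) \<subseteq> {cverts} \<union> {S. S \<subseteq> cverts \<and> afree S}"
  proof
    fix S assume "S \<in> VF (crosspolytope :: (real ^ 'n) set)"
    then obtain F where F: "F face_of (crosspolytope :: (real ^ 'n) set)" "S = ext F" by (auto simp: VF_def)
    have Ssub: "S \<subseteq> cverts" using face_ext_sub[OF F(1)] F(2) unfolding EC by simp
    show "S \<in> {cverts} \<union> {S. S \<subseteq> cverts \<and> afree S}"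
    proof (cases "F = crosspolytope")
      case True then show ?thesis using F(2) EC by simp
    next
      case False
      have "afree S"
      proof (rule ccontr)
        assume "\<not> afree S"
        then obtain i where i: "axis i 1 \<in> S" "- axis i 1 \<in> S" by (auto simp: afree_def)
        then have iF: "axis i 1 \<in> F" "- axis i 1 \<in> F"
          using F(2) by (auto simp: ext_def extreme_point_of_def)
        have "midpoint (axis i 1) (- axis i (1::real)) \<in> F"
          using iF face_of_imp_convex[OF F(1)] midpoint_in_closed_segment convex_contains_segment
          by blast
        then have z: "0 \<in> F" by (simp add: midpoint_def)
        have "cverts \<subseteq> F"
        proof
          fix v :: "real ^ 'n" assume "v \<in> cverts"
          then obtain j where j: "v = axis j 1 \<or> v = - axis j 1" by (auto simp: cverts_def)
          have ne: "axis j (1::real) \<noteq> - axis j 1" using axis_neg_ne by blast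
          have "0 \<in> open_segment (axis j 1) (- axis j (1::real))"
            using midpoint_in_open_segment[of "axis j (1::real)" "- axis j 1"] ne
            by (simp add: midpoint_def)
          moreover have "axis j 1 \<in> crosspolytope" "- axis j (1::real) \<in> crosspolytope"
            unfolding cross_eq by (auto intro!: hull_inc simp: cverts_def)
          ultimately show "v \<in> F" using face_ofD[OF F(1) _ _ _ z] j by blast
        qed
        then have "crosspolytope \<subseteq> F" unfolding cross_eq
          using face_of_imp_convex[OF F(1)] by (simp add: hull_minimal)
        then show False using False face_of_imp_subset[OF F(1)] by blast
      qed
      then show ?thesis using Ssub by blast
    qed
  qed
next
  show "{cverts} \<union> {S. S \<subseteq> cverts \<and> afree S} \<subseteq> VF (crosspolytope :: (real ^ 'n) set)"
  proof
    fix S :: "(real ^ 'n) set" assume "S \<in> {cverts} \<union> {S. S \<subseteq> cverts \<and> afree S}"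
    then show "S \<in> VF (crosspolytope :: (real ^ 'n) set)"
    proof
      assume "S \<in> {cverts}"
      then show ?thesis using EC face_of_refl[of "crosspolytope :: (real ^ 'n) set"]
        unfolding VF_def cross_eq by (auto intro: convex_convex_hull)
    next
      assume "S \<in> {S. S \<subseteq> cverts \<and> afree S}"
      then have "afree S" "S \<subseteq> cverts" by auto
      then show ?thesis using afree_face(1) ext_afree unfolding VF_def by blast
    qed
  qed
qed
qed


lemma three_hyper:
  fixes R :: "'a::euclidean_space set"
  assumes fin: "finite R" and w: "w0 \<notin> R" "w1 \<notin> R" "w0 \<noteq> w1"
    and su: "sum u (insert w1 (insert w0 R)) = 1"
    and y: "y = (\<Sum>x\<in>insert w1 (insert w0 R). u x *\<^sub>R x)"
    and r0: "\<forall>r\<in>R. a0 \<bullet> r = b0" and r1: "\<forall>r\<in>R. a1 \<bullet> r = b1" and r2: "\<forall>r\<in>R. a2 \<bullet> r = b2"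
    and h: "a0 \<bullet> w0 = b0" "a1 \<bullet> w1 = b1" "a0 \<bullet> w1 < b0" "a1 \<bullet> w0 < b1" "a2 \<bullet> w0 < b2"
       "a2 \<bullet> w1 < b2" "a0 \<bullet> y < b0" "a1 \<bullet> y < b1" "a2 \<bullet> y = b2"
  shows False
proof -
  let ?X = "insert w1 (insert w0 R)"
  have finX: "finite ?X" using fin by simp
  have key: "a \<bullet> y - b = u w0 * (a \<bullet> w0 - b) + u w1 * (a \<bullet> w1 - b)" if r: "\<forall>r\<in>R. a \<bullet> r = b" for a b
  proof -
    have "a \<bullet> y = (\<Sum>x\<in>?X. u x * (a \<bullet> x))" unfolding y by (simp add: inner_sum_right)
    moreover have "b = (\<Sum>x\<in>?X. u x * b)" using su by (simp add: sum_distrib_right[symmetric])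
    ultimately have "a \<bullet> y - b = (\<Sum>x\<in>?X. u x * (a \<bullet> x - b))"
      by (simp add: sum_subtractf right_diff_distrib)
    also have "\<dots> = u w1 * (a \<bullet> w1 - b) + (u w0 * (a \<bullet> w0 - b) + (\<Sum>x\<in>R. u x * (a \<bullet> x - b)))"
      using fin w by simp
    also have "(\<Sum>x\<in>R. u x * (a \<bullet> x - b)) = 0" using r by simp
    finally show ?thesis by simp
  qed
  have e0: "a0 \<bullet> y - b0 = u w1 * (a0 \<bullet> w1 - b0)" using key[OF r0] h(1) by simp
  have e1: "a1 \<bullet> y - b1 = u w0 * (a1 \<bullet> w0 - b1)" using key[OF r1] h(2) by simp
  have e2: "a2 \<bullet> y - b2 = u w0 * (a2 \<bullet> w0 - b2) + u w1 * (a2 \<bullet> w1 - b2)" using key[OF r2] .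
  have p1: "u w1 > 0"
  proof (rule ccontr)
    assume "\<not> u w1 > 0"
    then have "u w1 * (a0 \<bullet> w1 - b0) \<ge> 0" using h(3) by (simp add: mult_nonpos_nonpos)
    then show False using e0 h(7) by simp
  qed
  have p0: "u w0 > 0"
  proof (rule ccontr)
    assume "\<not> u w0 > 0"
    then have "u w0 * (a1 \<bullet> w0 - b1) \<ge> 0" using h(4) by (simp add: mult_nonpos_nonpos)
    then show False using e1 h(8) by simp
  qed
  have "u w0 * (a2 \<bullet> w0 - b2) < 0" using p0 h(5) by (simp add: mult_pos_neg)
  moreover have "u w1 * (a2 \<bullet> w1 - b2) < 0" using p1 h(6) by (simp add: mult_pos_neg)
  ultimately show False using e2 h(9) by simp
qed

locale spoly =
  fixes P :: "'a::euclidean_space set" and d :: nat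
  assumes sp: "simplicial_polytope d P" and d1: "d \<ge> 1"
begin

lemma P_poly: "polytope P" and P_dim: "aff_dim P = int d"
  and P_fac: "\<And>F. F facet_of P \<Longrightarrow> (int d - 1) simplex F"
  using sp by (auto simp: simplicial_polytope_def)

lemma P_polyh: "polyhedron P" using P_poly polytope_imp_polyhedron by blast

lemma P_convex: "convex P" using P_poly polytope_imp_convex by blast

abbreviation "Fs \<equiv> boundary_facets P"

lemma Fs_def': "Fs = {ext F | F. F facet_of P}"
  by (simp add: boundary_facets_def ext_def)

lemma facet_simplex:
  assumes "G facet_of P"
  shows "\<not> affine_dependent (ext G) \<and> finite (ext G) \<and> card (ext G) = d \<and> G = convex hull (ext G)"
proof -
  obtain C where C: "\<not> affine_dependent C" "int (card C) = int d - 1 + 1" "G = convex hull C"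
    using P_fac[OF assms] by (auto simp: simplex_def)
  have "ext G = C" using C(1,3) extreme_point_of_convex_hull_affine_independent by (auto simp: ext_def)
  then show ?thesis using C aff_independent_finite by auto
qed

lemma Fs_E:
  assumes "B \<in> Fs"
  obtains G where "G facet_of P" "B = ext G" "\<not> affine_dependent B" "finite B" "card B = d"
    "G = convex hull B"
  using assms facet_simplex unfolding Fs_def' by blast

lemma Fs_fin: "finite Fs"
proof -
  have "finite {F. F facet_of P}" using finite_polytope_facets[OF P_poly] .
  then show ?thesis unfolding Fs_def' by (simp add: setcompr_eq_image)
qed

lemma facet_eq: "F facet_of P \<Longrightarrow> F' facet_of P \<Longrightarrow> ext F = ext F' \<Longrightarrow> F = F'"
  using face_hull_ext[OF P_poly] facet_of_imp_face_of by metis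

lemma facet_exists: "\<exists>G. G facet_of P"
  using polytope_facet_exists[OF P_poly] P_dim d1 by force

lemma ext_P: "ext P = \<Union>Fs"
proof
  show "\<Union>Fs \<subseteq> ext P" unfolding Fs_def' using face_ext_sub facet_of_imp_face_of by blast
  show "ext P \<subseteq> \<Union>Fs"
  proof
    fix v assume v: "v \<in> ext P"
    have f: "{v} face_of P" using v by (simp add: ext_def face_of_singleton)
    have "{v} \<noteq> P" using P_dim d1 by auto
    then obtain G where G: "G facet_of P" "{v} \<subseteq> G"
      using face_of_polyhedron_subset_facet[OF P_polyh f] by blast
    then have "v \<in> ext G" using v extreme_point_of_face[OF facet_of_imp_face_of[OF G(1)]]
      by (auto simp: ext_def)
    then show "v \<in> \<Union>Fs" using G(1) unfolding Fs_def' by blast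
  qed
qed

lemma VF_P: "VF P = {ext P} \<union> {S. \<exists>B\<in>Fs. S \<subseteq> B}"
proof
  show "VF P \<subseteq> {ext P} \<union> {S. \<exists>B\<in>Fs. S \<subseteq> B}"
  proof
    fix S assume "S \<in> VF P"
    then obtain F where F: "F face_of P" "S = ext F" by (auto simp: VF_def)
    show "S \<in> {ext P} \<union> {S. \<exists>B\<in>Fs. S \<subseteq> B}"
    proof (cases "F = P")
      case True then show ?thesis using F by simp
    next
      case notP: False
      show ?thesis
      proof (cases "F = {}")
        case True
        obtain G where "G facet_of P" using facet_exists by blast
        then have "ext G \<in> Fs" unfolding Fs_def' by blast
        then show ?thesis using True F by (auto simp: ext_def)
      next
        case False
        obtain G where G: "G facet_of P" "F \<subseteq> G"
          using face_of_polyhedron_subset_facet[OF P_polyh F(1) False notP] by blast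
        have "F face_of G" using face_of_subset[OF F(1) G(2) facet_of_imp_subset[OF G(1)]] .
        then have "ext F \<subseteq> ext G" by (rule face_ext_sub)
        moreover have "ext G \<in> Fs" using G(1) unfolding Fs_def' by blast
        ultimately show ?thesis using F by blast
      qed
    qed
  qed
  show "{ext P} \<union> {S. \<exists>B\<in>Fs. S \<subseteq> B} \<subseteq> VF P"
  proof
    fix S assume "S \<in> {ext P} \<union> {S. \<exists>B\<in>Fs. S \<subseteq> B}"
    then show "S \<in> VF P"
    proof
      assume "S \<in> {ext P}" then show ?thesis using face_of_refl[OF P_convex] by (auto simp: VF_def)
    next
      assume "S \<in> {S. \<exists>B\<in>Fs. S \<subseteq> B}"
      then obtain B where B: "B \<in> Fs" "S \<subseteq> B" by blast
      obtain G where G: "G facet_of P" "B = ext G" "\<not> affine_dependent B" "G = convex hull B"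
        using Fs_E[OF B(1)] by metis
      have "convex hull S face_of G" using face_of_convex_hull_affine_independent[OF G(3)] B(2) G(4) by blast
      then have f: "convex hull S face_of P" using face_of_trans facet_of_imp_face_of[OF G(1)] by blast
      have "\<not> affine_dependent S" using affine_independent_subset[OF G(3) B(2)] .
      then have "ext (convex hull S) = S"
        using extreme_point_of_convex_hull_affine_independent by (auto simp: ext_def)
      then show ?thesis using f unfolding VF_def by blast
    qed
  qed
qed

lemma PM_ex:
  assumes B: "B \<in> Fs" and v: "v \<in> B"
  shows "\<exists>B'\<in>Fs. B' \<noteq> B \<and> B - {v} \<subseteq> B'"
proof -
  obtain G where G: "G facet_of P" "B = ext G" "\<not> affine_dependent B" "finite B" "card B = d"
    "G = convex hull B" using Fs_E[OF B] by metis
  let ?R = "B - {v}"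
  have vR: "v \<notin> affine hull ?R" using G(3) v unfolding affine_dependent_def by blast
  have BP: "B \<subseteq> ext P" using ext_P B by blast
  show ?thesis
  proof (cases "?R = {}")
    case True
    then have Bv: "B = {v}" using v by blast
    have "ext P \<noteq> {v} \<and> ext P \<noteq> {}"
    proof
      have "P = convex hull ext P" unfolding ext_def
        using Krein_Milman_Minkowski polytope_imp_compact[OF P_poly] P_convex by blast
      have "aff_dim P \<le> 0" if "ext P \<subseteq> {v}"
      proof -
        have "convex hull ext P \<subseteq> convex hull {v}" using that by (rule hull_mono)
        then have "P \<subseteq> {v}" using \<open>P = convex hull ext P\<close> by simp
        then have "aff_dim P \<le> aff_dim {v}" by (rule aff_dim_subset)
        then show ?thesis by simp
      qed
      then show "ext P \<noteq> {v}" "ext P \<noteq> {}" using P_dim d1 by force+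
    qed
    then obtain u where u: "u \<in> ext P" "u \<noteq> v" by blast
    then obtain B' where B': "B' \<in> Fs" "u \<in> B'" using ext_P by blast
    then show ?thesis using Bv u True by auto
  next
    case False
    have cf: "convex hull ?R face_of P"
      using face_of_convex_hull_affine_independent[OF G(3)] G(6) face_of_trans facet_of_imp_face_of[OF G(1)]
      by blast
    have ne: "convex hull ?R \<noteq> {}" using False by simp
    have vP: "v \<in> P" using v G(6) facet_of_imp_subset[OF G(1)] hull_subset[of B convex] by blast
    have vnR: "v \<notin> convex hull ?R" using vR convex_hull_subset_affine_hull by blast
    have neP: "convex hull ?R \<noteq> P" using vP vnR by blast
    have eq: "convex hull ?R = \<Inter>{F. F facet_of P \<and> convex hull ?R \<subseteq> F}"
      using face_of_polyhedron[OF P_polyh cf ne neP] .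
    have RG: "convex hull ?R \<subseteq> G" using G(6) by (simp add: hull_mono)
    have "\<exists>F. F facet_of P \<and> convex hull ?R \<subseteq> F \<and> F \<noteq> G"
    proof (rule ccontr)
      assume "\<not> ?thesis"
      then have "{F. F facet_of P \<and> convex hull ?R \<subseteq> F} = {G}" using G(1) RG by blast
      then have "convex hull ?R = G" using eq by simp
      then show False using vnR v G(6) hull_subset[of B convex] by blast
    qed
    then obtain F where F: "F facet_of P" "convex hull ?R \<subseteq> F" "F \<noteq> G" by blast
    have "ext F \<in> Fs" using F(1) unfolding Fs_def' by blast
    moreover have "ext F \<noteq> B" using facet_eq[OF F(1) G(1)] F(3) G(2) by blast
    moreover have "?R \<subseteq> ext F"
    proof
      fix r assume r: "r \<in> ?R"
      have "r \<in> F" using r F(2) hull_subset[of ?R convex] by blast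
      moreover have "r \<in> ext P" using r BP by blast
      ultimately show "r \<in> ext F" using extreme_point_of_face[OF facet_of_imp_face_of[OF F(1)]]
        by (auto simp: ext_def)
    qed
    ultimately show ?thesis by blast
  qed
qed

lemma insert_shape:
  assumes X: "X \<in> Fs" and B: "B \<in> Fs" and v: "v \<in> B" and RX: "B - {v} \<subseteq> X"
  shows "\<exists>w. w \<notin> B - {v} \<and> X = insert w (B - {v})"
proof -
  have fX: "finite X" "card X = d" and fB: "finite B" "card B = d" using Fs_E[OF X] Fs_E[OF B] by metis+
  have "card (B - {v}) = d - 1" using fB v by simp
  then have "card (X - (B - {v})) = 1"
    using fX RX d1 by (simp add: card_Diff_subset[OF finite_subset[OF RX fX(1)] RX])
  then obtain w where w: "X - (B - {v}) = {w}" by (meson card_1_singletonE)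
  then show ?thesis using RX by blast
qed

lemma strict_side:
  assumes G: "G facet_of P" and a: "P \<subseteq> {x. a \<bullet> x \<le> \<beta>}" "G = P \<inter> {x. a \<bullet> x = \<beta>}"
    and w: "w \<in> ext P" "w \<notin> ext G"
  shows "a \<bullet> w < \<beta>"
proof -
  have wP: "w \<in> P" using w(1) by (auto simp: ext_def extreme_point_of_def)
  have "a \<bullet> w \<noteq> \<beta>"
  proof
    assume "a \<bullet> w = \<beta>"
    then have "w \<in> G" using a(2) wP by blast
    then have "w \<in> ext G" using w(1) extreme_point_of_face[OF facet_of_imp_face_of[OF G]]
      by (auto simp: ext_def)
    then show False using w(2) by blast
  qed
  then show ?thesis using a(1) wP by fastforce
qed

lemma PM_un:
  assumes B: "B \<in> Fs" and v: "v \<in> B" and B1: "B1 \<in> Fs" and B2: "B2 \<in> Fs"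
    and n1: "B1 \<noteq> B" and n2: "B2 \<noteq> B" and s1: "B - {v} \<subseteq> B1" and s2: "B - {v} \<subseteq> B2"
  shows "B1 = B2"
proof (rule ccontr)
  assume n12: "B1 \<noteq> B2"
  let ?R = "B - {v}"
  obtain w1 where w1: "w1 \<notin> ?R" "B1 = insert w1 ?R" using insert_shape[OF B1 B v s1] by blast
  obtain w2 where w2: "w2 \<notin> ?R" "B2 = insert w2 ?R" using insert_shape[OF B2 B v s2] by blast
  have B0: "B = insert v ?R" using v by blast
  have vR: "v \<notin> ?R" by blast
  have d01: "v \<noteq> w1" using n1 w1 B0 by metis
  have d02: "v \<noteq> w2" using n2 w2 B0 by metis
  have d12: "w1 \<noteq> w2" using n12 w1 w2 by metis
  obtain G0 where G0: "G0 facet_of P" "B = ext G0" "\<not> affine_dependent B" "finite B" "card B = d"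
    "G0 = convex hull B" using Fs_E[OF B] by metis
  obtain G1 where G1: "G1 facet_of P" "B1 = ext G1" using Fs_E[OF B1] by metis
  obtain G2 where G2: "G2 facet_of P" "B2 = ext G2" using Fs_E[OF B2] by metis
  obtain a0 b0 where h0: "P \<subseteq> {x. a0 \<bullet> x \<le> b0}" "G0 = P \<inter> {x. a0 \<bullet> x = b0}"
    using facet_of_polyhedron[OF P_polyh G0(1)] by metis
  obtain a1 b1 where h1: "P \<subseteq> {x. a1 \<bullet> x \<le> b1}" "G1 = P \<inter> {x. a1 \<bullet> x = b1}"
    using facet_of_polyhedron[OF P_polyh G1(1)] by metis
  obtain a2 b2 where h2: "P \<subseteq> {x. a2 \<bullet> x \<le> b2}" "G2 = P \<inter> {x. a2 \<bullet> x = b2}"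
    using facet_of_polyhedron[OF P_polyh G2(1)] by metis
  have on: "a \<bullet> x = \<beta>" if "G = P \<inter> {x. a \<bullet> x = \<beta>}" "x \<in> ext G" for G a \<beta> x
    using that by (auto simp: ext_def extreme_point_of_def)
  have extP: "B \<subseteq> ext P" "B1 \<subseteq> ext P" "B2 \<subseteq> ext P" using ext_P B B1 B2 by blast+
  have r0: "\<forall>r\<in>?R. a0 \<bullet> r = b0" using on[OF h0(2)] G0(2) by blast
  have r1: "\<forall>r\<in>?R. a1 \<bullet> r = b1" using on[OF h1(2)] G1(2) s1 by blast
  have r2: "\<forall>r\<in>?R. a2 \<bullet> r = b2" using on[OF h2(2)] G2(2) s2 by blast
  have e0: "a0 \<bullet> v = b0" using on[OF h0(2)] G0(2) v by blast
  have e1: "a1 \<bullet> w1 = b1" using on[OF h1(2)] G1(2) w1 by blast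
  have e2: "a2 \<bullet> w2 = b2" using on[OF h2(2)] G2(2) w2 by blast
  have nB: "w1 \<notin> B" "w2 \<notin> B" using w1(1) w2(1) d01 d02 by auto
  have nB1: "v \<notin> B1" "w2 \<notin> B1" using w1 w2(1) d01 d12 by auto
  have nB2: "v \<notin> B2" "w1 \<notin> B2" using w2 w1(1) d02 d12 by auto
  have xP: "v \<in> ext P" "w1 \<in> ext P" "w2 \<in> ext P" using extP v w1 w2 by auto
  have s01: "a0 \<bullet> w1 < b0" using strict_side[OF G0(1) h0 xP(2)] nB(1) G0(2) by simp
  have s02: "a0 \<bullet> w2 < b0" using strict_side[OF G0(1) h0 xP(3)] nB(2) G0(2) by simp
  have s10: "a1 \<bullet> v < b1" using strict_side[OF G1(1) h1 xP(1)] nB1(1) G1(2) by simp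
  have s12: "a1 \<bullet> w2 < b1" using strict_side[OF G1(1) h1 xP(3)] nB1(2) G1(2) by simp
  have s20: "a2 \<bullet> v < b2" using strict_side[OF G2(1) h2 xP(1)] nB2(1) G2(2) by simp
  have s21: "a2 \<bullet> w1 < b2" using strict_side[OF G2(1) h2 xP(2)] nB2(2) G2(2) by simp
  have BP: "B \<subseteq> P" "w1 \<in> P" "w2 \<in> P" using extP w1 w2 by (auto simp: ext_def extreme_point_of_def)
  have adB: "aff_dim B = int d - 1" using aff_dim_affine_independent[OF G0(3)] G0(5) by simp
  have "affine hull B \<subseteq> {x. a0 \<bullet> x = b0}"
    using r0 e0 B0 by (intro hull_minimal) (auto simp: affine_hyperplane)
  then have w1n: "w1 \<notin> affine hull B" using s01 by auto
  let ?X = "insert w1 B"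
  have adX: "aff_dim ?X = int d" using aff_dim_insert[of w1 B] w1n adB by simp
  have sub: "affine hull ?X \<subseteq> affine hull P" using BP by (intro hull_mono) auto
  have "affine hull ?X = affine hull P"
    by (rule affine_dim_equal) (use sub adX P_dim in auto)
  then have "w2 \<in> affine hull ?X" using BP hull_subset[of P affine] by blast
  moreover have finX: "finite ?X" using G0(4) by simp
  ultimately obtain u where u: "sum u ?X = 1" "(\<Sum>x\<in>?X. u x *\<^sub>R x) = w2"
    using affine_hull_finite[OF finX] by blast
  have XX: "?X = insert w1 (insert v ?R)" using B0 by simp
  have finR: "finite ?R" using G0(4) by simp
  show False
    using three_hyper[OF finR vR w1(1) d01, of u w2 a0 b0 a1 b1 a2 b2] u XX r0 r1 r2 e0 e1 s01 s10 s20 s21 s02 s12 e2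
    by simp
qed

end


lemma axis_inj1: "axis i (1::real) = axis j 1 \<longleftrightarrow> i = j"
  by (simp add: axis_eq_axis)

theorem mainTheorem2:
  fixes P :: "'a::euclidean_space set" and F0 :: "'a set"
  assumes "simplicial_polytope CARD('n) P"
    and "F0 \<in> boundary_facets P"
    and "\<forall>L. layered_order (boundary_facets P) F0 L \<longrightarrow>
           shelling_order L \<and>
           (\<forall>j < length L. \<forall>i. facet_type L j = i \<longleftrightarrow> L ! j \<in> layer (boundary_facets P) F0 i)"
  shows "comb_equiv P (crosspolytope :: (real ^ 'n) set)"
proof -
  define d where "d = CARD('n)"
  define Fs where "Fs = boundary_facets P"
  have d1: "d \<ge> 1" unfolding d_def using zero_less_card_finite[where 'a='n] by linarith
  have sp: "spoly P d" using assms(1) d1 unfolding spoly_def d_def by blast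
  have F0: "F0 \<in> Fs" using assms(2) by (simp add: Fs_def)
  have TH: "\<forall>L. layered_order Fs F0 L \<longrightarrow>
      (\<forall>j < length L. \<forall>i. facet_type L j = i \<longleftrightarrow> L ! j \<in> layer Fs F0 i)"
  proof (rule allI, rule impI)
    fix L assume L: "layered_order Fs F0 L"
    show "\<forall>j < length L. \<forall>i. facet_type L j = i \<longleftrightarrow> L ! j \<in> layer Fs F0 i"
      using conjunct2[OF mp[OF spec[OF assms(3), of L]]] L by (simp add: Fs_def)
  qed
  have fin: "finite Fs" using spoly.Fs_fin[OF sp] by (simp add: Fs_def)
  have ss: "shell_setup Fs F0 d"
  proof (unfold_locales)
    show "finite Fs" by (rule fin)
    show "F0 \<in> Fs" by (rule F0)
    show "\<And>B. B \<in> Fs \<Longrightarrow> finite B \<and> card B = d"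
      using spoly.Fs_E[OF sp] unfolding Fs_def by metis
    show "1 \<le> d" by (rule d1)
    show "\<And>B v. B \<in> Fs \<Longrightarrow> v \<in> B \<Longrightarrow> \<exists>B'\<in>Fs. B' \<noteq> B \<and> B - {v} \<subseteq> B'"
      using spoly.PM_ex[OF sp] unfolding Fs_def by blast
    show "\<And>B v B1 B2. B \<in> Fs \<Longrightarrow> v \<in> B \<Longrightarrow> B1 \<in> Fs \<Longrightarrow> B2 \<in> Fs \<Longrightarrow> B1 \<noteq> B \<Longrightarrow> B2 \<noteq> B
        \<Longrightarrow> B - {v} \<subseteq> B1 \<Longrightarrow> B - {v} \<subseteq> B2 \<Longrightarrow> B1 = B2"
      using spoly.PM_un[OF sp] unfolding Fs_def by blast
    show "\<And>G m A. G \<in> layer Fs F0 m \<Longrightarrow> A \<subseteq> layer Fs F0 m - {G} \<Longrightarrow>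
        card {v \<in> G. \<exists>H \<in> (\<Union>k<m. layer Fs F0 k) \<union> A. G - {v} \<subseteq> H} = m"
      using type_lemma[OF TH fin F0] by blast
    show "\<And>H. H \<in> Fs \<Longrightarrow> \<exists>i. H \<in> layer Fs F0 i"
      using all_in_layers[OF TH fin F0] by blast
  qed
  define I where "I = {..<d}"
  obtain a b where ab: "inj_on a I" "inj_on b I" "\<And>i j. i \<in> I \<Longrightarrow> j \<in> I \<Longrightarrow> a i \<noteq> b j"
    and FsT: "Fs = {a ` (I - S) \<union> b ` S | S. S \<subseteq> I}"
    using shell_setup.comb_structure[OF ss] unfolding I_def by blast
  define U where "U = a ` I \<union> b ` I"
  have extP: "ext P = U"
  proof -
    have "ext P = \<Union>Fs" using spoly.ext_P[OF sp] by (simp add: Fs_def)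
    also have "\<dots> = U"
    proof
      show "\<Union>Fs \<subseteq> U" unfolding FsT U_def by blast
      have "a ` I \<in> Fs" unfolding FsT by (rule CollectI, rule exI[of _ "{}"]) simp
      moreover have "b ` I \<in> Fs" unfolding FsT by (rule CollectI, rule exI[of _ I]) simp
      ultimately show "U \<subseteq> \<Union>Fs" unfolding U_def by blast
    qed
    finally show ?thesis .
  qed
  have VFP: "VF P = {U} \<union> {S. \<exists>X\<subseteq>I. S \<subseteq> a ` (I - X) \<union> b ` X}"
    using spoly.VF_P[OF sp] extP unfolding Fs_def[symmetric] FsT by blast
  obtain h where h: "bij_betw h {0..<CARD('n)} (UNIV :: 'n set)"
    using ex_bij_betw_nat_finite[of "UNIV :: 'n set"] by auto
  then have hI: "bij_betw h I (UNIV :: 'n set)" unfolding I_def d_def by (simp add: atLeast0LessThan)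
  have hinj: "\<And>i j. i \<in> I \<Longrightarrow> j \<in> I \<Longrightarrow> h i = h j \<longleftrightarrow> i = j"
    using hI by (auto simp: bij_betw_def inj_on_eq_iff)
  have hsurj: "\<exists>i\<in>I. h i = k" for k
  proof -
    have "k \<in> h ` I" using hI by (simp add: bij_betw_def)
    then show ?thesis by (metis imageE)
  qed
  define \<phi> :: "'a \<Rightarrow> real ^ 'n" where
    "\<phi> x = (if x \<in> a ` I then axis (h (inv_into I a x)) 1 else - axis (h (inv_into I b x)) 1)" for x
  have phia: "\<phi> (a i) = axis (h i) 1" if "i \<in> I" for i
    using that ab(1) by (simp add: \<phi>_def inv_into_f_f)
  have phib: "\<phi> (b i) = - axis (h i) 1" if "i \<in> I" for i
  proof -
    have "b i \<notin> a ` I"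
    proof
      assume "b i \<in> a ` I"
      then obtain j where "j \<in> I" "b i = a j" by blast
      then show False using ab(3)[of j i] that by simp
    qed
    then show ?thesis using that ab(2) by (simp add: \<phi>_def inv_into_f_f)
  qed
  have Ucases: "x \<in> U \<Longrightarrow> (\<exists>i\<in>I. x = a i) \<or> (\<exists>i\<in>I. x = b i)" for x
    unfolding U_def by blast
  have ax_in: "axis k 1 \<in> \<phi> ` S \<longleftrightarrow> (\<exists>i\<in>I. h i = k \<and> a i \<in> S)" if S: "S \<subseteq> U" for S k
  proof
    assume "axis k 1 \<in> \<phi> ` S"
    then obtain x where x0: "axis k 1 = \<phi> x" "x \<in> S" by (rule imageE)
    then have x: "x \<in> S" "\<phi> x = axis k 1" by simp_all
    have xU: "x \<in> U" using x S by blast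
    from Ucases[OF xU] show "\<exists>i\<in>I. h i = k \<and> a i \<in> S"
    proof (elim disjE bexE)
      fix i assume "i \<in> I" "x = a i" then show ?thesis using x phia axis_inj1 by metis
    next
      fix i assume "i \<in> I" "x = b i" then show ?thesis using x phib axis_neg_ne by metis
    qed
  next
    assume "\<exists>i\<in>I. h i = k \<and> a i \<in> S"
    then show "axis k 1 \<in> \<phi> ` S" using phia by (metis image_eqI)
  qed
  have nax_in: "- axis k 1 \<in> \<phi> ` S \<longleftrightarrow> (\<exists>i\<in>I. h i = k \<and> b i \<in> S)" if S: "S \<subseteq> U" for S k
  proof
    assume "- axis k 1 \<in> \<phi> ` S"
    then obtain x where x0: "- axis k 1 = \<phi> x" "x \<in> S" by (rule imageE)
    then have x: "x \<in> S" "\<phi> x = - axis k 1" by simp_all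
    have xU: "x \<in> U" using x S by blast
    from Ucases[OF xU] show "\<exists>i\<in>I. h i = k \<and> b i \<in> S"
    proof (elim disjE bexE)
      fix i assume "i \<in> I" "x = a i" then show ?thesis using x phia axis_neg_ne by metis
    next
      fix i assume "i \<in> I" "x = b i" then show ?thesis using x phib axis_inj1 neg_equal_iff_equal by metis
    qed
  next
    assume "\<exists>i\<in>I. h i = k \<and> b i \<in> S"
    then show "- axis k 1 \<in> \<phi> ` S" using phib by (metis image_eqI)
  qed
  have phi_inj: "inj_on \<phi> U"
  proof (rule inj_onI)
    fix x y assume x: "x \<in> U" and y: "y \<in> U" and e: "\<phi> x = \<phi> y"
    from Ucases[OF x] Ucases[OF y] show "x = y"
    proof (elim disjE bexE)
      fix i j assume "i \<in> I" "x = a i" "j \<in> I" "y = a j"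
      then show ?thesis using e phia axis_inj1 hinj by metis
    next
      fix i j assume "i \<in> I" "x = a i" "j \<in> I" "y = b j"
      then show ?thesis using e phia phib axis_neg_ne by metis
    next
      fix i j assume "i \<in> I" "x = b i" "j \<in> I" "y = a j"
      then show ?thesis using e phia phib axis_neg_ne by metis
    next
      fix i j assume "i \<in> I" "x = b i" "j \<in> I" "y = b j"
      then show ?thesis using e phib axis_inj1 hinj neg_equal_iff_equal by metis
    qed
  qed
  have phi_img: "\<phi> ` U = cverts"
  proof
    show "\<phi> ` U \<subseteq> cverts"
    proof
      fix y assume "y \<in> \<phi> ` U"
      then obtain x where x: "x \<in> U" "y = \<phi> x" by blast
      from Ucases[OF x(1)] show "y \<in> cverts"
        using x phia phib by (auto simp: cverts_def)
    qed
    show "cverts \<subseteq> \<phi> ` U"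
    proof
      fix y :: "real ^ 'n" assume "y \<in> cverts"
      then obtain k where k: "y = axis k 1 \<or> y = - axis k 1" by (auto simp: cverts_def)
      obtain i where i: "i \<in> I" "h i = k" using hsurj by blast
      have "a i \<in> U" "b i \<in> U" using i unfolding U_def by auto
      then show "y \<in> \<phi> ` U" using k i phia phib by (metis image_eqI)
    qed
  qed
  have Q: "polytope (crosspolytope :: (real ^ 'n) set)"
    unfolding cross_eq by (rule polytope_convex_hull[OF cverts_finite])
  have EC: "ext (crosspolytope :: (real ^ 'n) set) = cverts" by (rule ext_cross)
  have VFQ: "VF (crosspolytope :: (real ^ 'n) set) = {cverts} \<union> {S. S \<subseteq> cverts \<and> afree S}"
    by (rule VF_cross)
  show ?thesis
  proof (rule comb_equiv_vert[OF spoly.P_poly[OF sp] Q])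
    show "bij_betw \<phi> (ext P) (ext (crosspolytope :: (real ^ 'n) set))"
      unfolding extP EC bij_betw_def using phi_inj phi_img by blast
    fix S assume "S \<subseteq> ext P"
    then have S: "S \<subseteq> U" using extP by simp
    have imgS: "\<phi> ` S \<subseteq> cverts" using S phi_img by blast
    have eqU: "S = U \<longleftrightarrow> \<phi> ` S = cverts"
      using inj_on_image_eq_iff[OF phi_inj S subset_refl] phi_img by simp
    have free1: "(\<exists>X\<subseteq>I. S \<subseteq> a ` (I - X) \<union> b ` X) \<longleftrightarrow> (\<forall>i\<in>I. \<not> (a i \<in> S \<and> b i \<in> S))"
    proof
      assume "\<exists>X\<subseteq>I. S \<subseteq> a ` (I - X) \<union> b ` X"
      then obtain X where X: "X \<subseteq> I" "S \<subseteq> a ` (I - X) \<union> b ` X" by blast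
      show "\<forall>i\<in>I. \<not> (a i \<in> S \<and> b i \<in> S)"
      proof (intro ballI notI)
        fix i assume i: "i \<in> I" and ab2: "a i \<in> S \<and> b i \<in> S"
        have n1: "a i \<notin> b ` X"
        proof
          assume "a i \<in> b ` X"
          then obtain j where "j \<in> X" "a i = b j" by blast
          then show False using ab(3)[of i j] i X(1) by blast
        qed
        have n2: "b i \<notin> a ` (I - X)"
        proof
          assume "b i \<in> a ` (I - X)"
          then obtain j where "j \<in> I - X" "b i = a j" by blast
          then show False using ab(3)[of j i] i by simp
        qed
        have "a i \<in> a ` (I - X)" using ab2 X(2) n1 by blast
        then obtain j where j: "j \<in> I - X" "a i = a j" by blast
        then have "i = j" using ab(1) i by (auto simp: inj_on_eq_iff)
        then have "i \<notin> X" using j by blast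
        moreover have "b i \<in> b ` X" using ab2 X(2) n2 by blast
        then obtain j' where j': "j' \<in> X" "b i = b j'" by blast
        then have "i = j'" using ab(2) i X(1) by (auto simp: inj_on_eq_iff)
        then have "i \<in> X" using j' by blast
        ultimately show False by blast
      qed
    next
      assume fr: "\<forall>i\<in>I. \<not> (a i \<in> S \<and> b i \<in> S)"
      define X where "X = {i \<in> I. b i \<in> S}"
      have "S \<subseteq> a ` (I - X) \<union> b ` X"
      proof
        fix x assume x: "x \<in> S"
        have xU: "x \<in> U" using x S by blast
    from Ucases[OF xU] show "x \<in> a ` (I - X) \<union> b ` X"
        proof (elim disjE bexE)
          fix i assume i: "i \<in> I" "x = a i"
          then have "\<not> (a i \<in> S \<and> b i \<in> S)" using fr by blast
          then have "i \<notin> X" using i x by (simp add: X_def)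
          then have "i \<in> I - X" using i by blast
          then show ?thesis using i by blast
        next
          fix i assume i: "i \<in> I" "x = b i"
          then have "i \<in> X" using x by (simp add: X_def)
          then show ?thesis using i by blast
        qed
      qed
      moreover have "X \<subseteq> I" unfolding X_def by blast
      ultimately show "\<exists>X\<subseteq>I. S \<subseteq> a ` (I - X) \<union> b ` X" by blast
    qed
    have free2: "afree (\<phi> ` S) \<longleftrightarrow> (\<forall>i\<in>I. \<not> (a i \<in> S \<and> b i \<in> S))"
    proof
      assume af: "afree (\<phi> ` S)"
      show "\<forall>i\<in>I. \<not> (a i \<in> S \<and> b i \<in> S)"
      proof (intro ballI notI)
        fix i assume i: "i \<in> I" and ab2: "a i \<in> S \<and> b i \<in> S"
        have "axis (h i) 1 \<in> \<phi> ` S" using ax_in[OF S] i ab2 by blast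
        moreover have "- axis (h i) 1 \<in> \<phi> ` S" using nax_in[OF S] i ab2 by blast
        ultimately show False using af by (auto simp: afree_def)
      qed
    next
      assume fr: "\<forall>i\<in>I. \<not> (a i \<in> S \<and> b i \<in> S)"
      show "afree (\<phi> ` S)" unfolding afree_def
      proof (intro allI notI)
        fix k assume k: "axis k 1 \<in> \<phi> ` S \<and> - axis k 1 \<in> \<phi> ` S"
        obtain i where i: "i \<in> I" "h i = k" "a i \<in> S" using k ax_in[OF S] by blast
        obtain j where j: "j \<in> I" "h j = k" "b j \<in> S" using k nax_in[OF S] by blast
        have "i = j" using hinj i j by metis
        then show False using fr i j by blast
      qed
    qed
    have "S \<in> VF P \<longleftrightarrow> S = U \<or> (\<exists>X\<subseteq>I. S \<subseteq> a ` (I - X) \<union> b ` X)" unfolding VFP by blast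
    also have "\<dots> \<longleftrightarrow> \<phi> ` S = cverts \<or> (\<phi> ` S \<subseteq> cverts \<and> afree (\<phi> ` S))"
      using eqU free1 free2 imgS by blast
    also have "\<dots> \<longleftrightarrow> \<phi> ` S \<in> VF (crosspolytope :: (real ^ 'n) set)" unfolding VFQ by blast
    finally show "S \<in> VF P \<longleftrightarrow> \<phi> ` S \<in> VF (crosspolytope :: (real ^ 'n) set)" .
  qed
qed


end
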